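(* Let $f\in L^1(\mathbb{R})$ be bounded and let $\nu$ be a finite (positive) measure on $\mathbb{R}$ such that $f$ is continuous at $\nu$-almost every point. Suppose that $\int_{-\infty}^{\infty}\hat f(t)\hat\nu(-t)\,dt$ converges at least conditionally. Then \[ \int_{-\infty}^\infty f(x)\,d\nu(x)=\frac{1}{2\pi}\int_{-\infty}^\infty\hat f(t)\hat\nu(-t)\,dt. \]
   Context: Fourier transforms: $\hat f(t)=\int_{\mathbb{R}}f(y)e^{ity}\,dy$ and $\hat\nu(t)=\int_{\mathbb{R}}e^{ity}\,d\nu(y)$. An integral $\int_{-\infty}^\infty g(t)\,dt$ converges conditionally if $g$ is locally integrable and $\lim_{A\to\infty}\int_{-A}^{A}g(t)\,dt$ exists and is finite; the integral is then defined as this limit. *)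

theory Defs
  imports "HOL-Analysis.Analysis"
begin

definition fourier_fun :: "(real \<Rightarrow> complex) \<Rightarrow> real \<Rightarrow> complex" where
  "fourier_fun f t = (LINT y|lborel. f y * cis (t * y))"

definition fourier_meas :: "real measure \<Rightarrow> real \<Rightarrow> complex" where
  "fourier_meas M t = (LINT y|M. cis (t * y))"

definition cond_conv_integral :: "(real \<Rightarrow> complex) \<Rightarrow> complex \<Rightarrow> bool" where
  "cond_conv_integral g I \<longleftrightarrow>
     (\<forall>a b. set_integrable lborel {a..b} g) \<and>
     ((\<lambda>A. LINT t:{-A..A}|lborel. g t) \<longlongrightarrow> I) at_top"

end

theory Submission
  imports Defs "HOL-Probability.Probability" "HOL-Real_Asymp.Real_Asymp"
begin


lemma gauss_int: "integrable lborel (\<lambda>t::real. exp (- (t^2) / 2))"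
  and gauss_integral: "(\<integral>t. exp (- (t^2) / 2) \<partial>lborel) = sqrt (2*pi)"
proof -
  have eq: "exp (- (t^2) / 2) = sqrt (2*pi) * std_normal_density t" for t
    by (simp add: std_normal_density_def)
  show "integrable lborel (\<lambda>t::real. exp (- (t^2) / 2))"
    unfolding eq by simp
  show "(\<integral>t. exp (- (t^2) / 2) \<partial>lborel) = sqrt (2*pi)"
    unfolding eq by simp
qed

lemma gauss_ft:
  "(\<integral>t. complex_of_real (exp (- (t^2) / 2)) * cis (t*u) \<partial>lborel) =
     complex_of_real (sqrt (2*pi) * exp (- (u^2) / 2))"
proof -
  have "char std_normal_distribution u = complex_of_real (exp (- (u^2) / 2))"
    by (simp add: char_std_normal_distribution)
  then have 1: "(\<integral>x. std_normal_density x *\<^sub>R iexp (u*x) \<partial>lborel) = complex_of_real (exp (- (u^2) / 2))"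
    unfolding char_def by (subst (asm) integral_density) auto
  have "(\<integral>t. complex_of_real (exp (- (t^2) / 2)) * cis (t*u) \<partial>lborel) =
      (\<integral>t. complex_of_real (sqrt (2*pi)) * (std_normal_density t *\<^sub>R iexp (u*t)) \<partial>lborel)"
    by (rule Bochner_Integration.integral_cong[OF refl]) (simp add: std_normal_density_def cis_conv_exp scaleR_conv_of_real mult.commute)
  also have "\<dots> = complex_of_real (sqrt (2*pi)) * complex_of_real (exp (- (u^2) / 2))"
    by (simp only: integral_mult_right_zero 1)
  finally show ?thesis by simp
qed

lemma W:
  fixes r :: real assumes r: "0 \<le> r"
  shows "integrable lborel (\<lambda>a. if r \<le> a then a * exp (- (a^2) / 2) else 0)"
    "(\<integral>a. (if r \<le> a then a * exp (- (a^2) / 2) else 0) \<partial>lborel) = exp (- (r^2) / 2)"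
proof -
  have lim: "((\<lambda>x::real. - exp (- (x^2) / 2)) \<longlongrightarrow> 0) at_top" by real_asymp
  have *: "set_integrable lborel (einterval (ereal r) \<infinity>) (\<lambda>a. a * exp (- (a^2) / 2)) \<and>
     (LBINT a=ereal r..\<infinity>. a * exp (- (a^2) / 2)) = 0 - (- exp (- (r^2) / 2))"
    apply (intro conjI interval_integral_FTC_nonneg[where F="\<lambda>x. - exp (- (x^2) / 2)"])
    using r lim
    by (auto intro!: derivative_eq_intros tendsto_eq_intros simp: ereal_tendsto_simps)
  have ae: "AE a in lborel. indicator {r<..} a *\<^sub>R (a * exp (- (a^2) / 2)) = (if r \<le> a then a * exp (- (a^2) / 2) else 0)"
    using AE_lborel_singleton[of r] by eventually_elim (auto simp: indicator_def)
  show "integrable lborel (\<lambda>a. if r \<le> a then a * exp (- (a^2) / 2) else 0)"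
    using * ae unfolding set_integrable_def
    by (rule_tac integrable_cong_AE[THEN iffD1]) auto
  have "(LBINT a=ereal r..\<infinity>. a * exp (- (a^2) / 2)) = (\<integral>a. (if r \<le> a then a * exp (- (a^2) / 2) else 0) \<partial>lborel)"
    unfolding interval_integral_to_infinity_eq set_lebesgue_integral_def
    by (rule integral_cong_AE) (use ae in auto)
  then show "(\<integral>a. (if r \<le> a then a * exp (- (a^2) / 2) else 0) \<partial>lborel) = exp (- (r^2) / 2)"
    using * by simp
qed


theorem lemmaA1:
  fixes f :: "real \<Rightarrow> complex" and M :: "real measure" and I :: complex
  assumes f_int: "integrable lborel f"
    and f_bdd: "bounded (range f)"
    and M_fin: "finite_measure M"
    and M_sets: "sets M = sets borel"
    and f_cont: "AE x in M. isCont f x"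
    and conv: "cond_conv_integral (\<lambda>t. fourier_fun f t * fourier_meas M (- t)) I"
  shows "(LINT x|M. f x) = I / (2 * pi)"
proof -
  interpret M: finite_measure M by (rule M_fin)
  note M_sets[measurable_cong]
  have cis_meas[measurable]: "cis \<in> borel_measurable borel"
    by (intro borel_measurable_continuous_onI continuous_intros)
  have f_meas[measurable]: "f \<in> borel_measurable borel"
    using borel_measurable_integrable[OF f_int] by simp
  obtain Cf where Cf: "\<And>x. norm (f x) \<le> Cf"
    using f_bdd unfolding bounded_iff by auto
  define Bf where "Bf = (\<integral>y. norm (f y) \<partial>lborel)"
  define Bm where "Bm = measure M (space M)"
  define fh where "fh = fourier_fun f"
  define mh where "mh = fourier_meas M"
  define g where "g t = fh t * mh (- t)" for t
  define S where "S A = (LINT t:{-A..A}|lborel. g t)" for A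
  have Bf0: "0 \<le> Bf" unfolding Bf_def by simp
  have Bm0: "0 \<le> Bm" unfolding Bm_def by simp
  have fh_meas[measurable]: "fh \<in> borel_measurable borel"
  proof -
    have "(\<lambda>t. \<integral>y. f y * cis (t*y) \<partial>lborel) \<in> borel_measurable borel"
      by (rule lborel.borel_measurable_lebesgue_integral) measurable
    then show ?thesis unfolding fh_def fourier_fun_def[abs_def] .
  qed
  have mh_meas[measurable]: "mh \<in> borel_measurable borel"
  proof -
    have "(\<lambda>t. \<integral>y. cis (t*y) \<partial>M) \<in> borel_measurable borel"
      by (rule M.borel_measurable_lebesgue_integral) measurable
    then show ?thesis unfolding mh_def fourier_meas_def[abs_def] .
  qed
  have g_meas[measurable]: "g \<in> borel_measurable borel"
    unfolding g_def[abs_def] by measurable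
  have fh_bd: "norm (fh t) \<le> Bf" for t
  proof -
    have "norm (fh t) \<le> (\<integral>y. norm (f y * cis (t*y)) \<partial>lborel)"
      unfolding fh_def fourier_fun_def by (rule integral_norm_bound)
    also have "\<dots> = Bf" unfolding Bf_def by (simp add: norm_mult)
    finally show ?thesis .
  qed
  have mh_bd: "norm (mh t) \<le> Bm" for t
  proof -
    have "norm (mh t) \<le> (\<integral>y. norm (cis (t*y)) \<partial>M)"
      unfolding mh_def fourier_meas_def by (rule integral_norm_bound)
    also have "\<dots> = Bm" unfolding Bm_def by simp
    finally show ?thesis .
  qed
  define B where "B = Bf * Bm"
  have B0: "0 \<le> B" unfolding B_def using Bf0 Bm0 by simp
  have g_bd: "norm (g t) \<le> B" for t
    unfolding g_def B_def norm_mult by (intro mult_mono fh_bd mh_bd) (auto simp: Bf0)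
  have S_lim: "(S \<longlongrightarrow> I) at_top"
    using conv unfolding cond_conv_integral_def S_def[abs_def] g_def fh_def mh_def by simp
  have g_loc: "set_integrable lborel {a..b} g" for a b
    using conv unfolding cond_conv_integral_def g_def[abs_def] fh_def mh_def by simp
  have S_neg: "S A = 0" if "A < 0" for A
    using that unfolding S_def set_lebesgue_integral_def by simp
  have S_alt: "S A = (\<integral>t. (if -A \<le> t \<and> t \<le> A then g t else 0) \<partial>lborel)" for A
    unfolding S_def set_lebesgue_integral_def
    by (rule Bochner_Integration.integral_cong) (auto simp: indicator_def)
  have S_meas[measurable]: "S \<in> borel_measurable borel"
  proof -
    have "(\<lambda>A. \<integral>t. (if -A \<le> t \<and> t \<le> A then g t else 0) \<partial>lborel) \<in> borel_measurable borel"
      by (rule lborel.borel_measurable_lebesgue_integral) measurable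
    then show ?thesis unfolding S_alt[abs_def] .
  qed
  have S_small: "norm (S A) \<le> 2 * A * B" if "0 \<le> A" for A
  proof -
    have int1: "integrable lborel (\<lambda>t. indicator {-A..A} t *\<^sub>R g t)"
      using g_loc[of "-A" A] unfolding set_integrable_def .
    have int2: "integrable lborel (\<lambda>t. indicator {-A..A} t * B)"
      by (intro integrable_mult_left integrable_real_indicator) (auto simp: emeasure_lborel_Icc_eq)
    have "norm (S A) \<le> (\<integral>t. indicator {-A..A} t * B \<partial>lborel)"
      unfolding S_def set_lebesgue_integral_def
      by (rule Bochner_Integration.integral_norm_bound_integral[OF int1 int2]) (auto simp: indicator_def g_bd)
    also have "\<dots> = 2 * A * B" using that by simp
    finally show ?thesis .
  qed
  obtain Sm where Sm: "\<And>A. norm (S A) \<le> Sm"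
  proof -
    from S_lim have "eventually (\<lambda>A. dist (S A) I < 1) at_top"
      by (rule tendstoD) simp
    then obtain A0 where A0: "\<And>A. A \<ge> A0 \<Longrightarrow> dist (S A) I < 1"
      unfolding eventually_at_top_linorder by blast
    have "norm (S A) \<le> max (norm I + 1) (2 * \<bar>A0\<bar> * B)" for A
    proof (cases "A \<ge> A0")
      case True
      then have "norm (S A) \<le> norm I + 1"
        using A0[OF True] norm_triangle_sub[of "S A" I] by (simp add: dist_norm)
      then show ?thesis by simp
    next
      case False
      show ?thesis
      proof (cases "A < 0")
        case True then show ?thesis using S_neg B0 by (simp add: max_def)
      next
        case F2: False
        have "norm (S A) \<le> 2 * A * B" using F2 S_small by simp
        also have "\<dots> \<le> 2 * \<bar>A0\<bar> * B" using False F2 B0 by (intro mult_right_mono) auto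
        finally show ?thesis by simp
      qed
    qed
    then show ?thesis by (rule that)
  qed
  have Sm0: "0 \<le> Sm" using Sm[of 0] norm_ge_zero order_trans by blast
  define w where "w \<sigma> t = exp (- ((\<sigma>*t)^2) / 2)" for \<sigma> t :: real
  define J where "J \<sigma> = (\<integral>t. w \<sigma> t *\<^sub>R g t \<partial>lborel)" for \<sigma>
  have w_int: "integrable lborel (w \<sigma>)" if "\<sigma> \<noteq> 0" for \<sigma>
  proof -
    have "integrable lborel (\<lambda>t. exp (- ((0 + \<sigma>*t)^2) / 2))"
      using lborel_integrable_real_affine[OF gauss_int that, of 0] .
    then show ?thesis unfolding w_def[abs_def] by simp
  qed
  have w_meas[measurable]: "w \<sigma> \<in> borel_measurable borel" for \<sigma> unfolding w_def[abs_def] by measurable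
  have w_pos: "0 < w \<sigma> t" for \<sigma> t unfolding w_def by simp
  have step3: "J \<sigma> = (\<integral>a. (a * exp (- (a^2) / 2)) *\<^sub>R S (a/\<sigma>) \<partial>lborel)" if \<sigma>: "\<sigma> > 0" for \<sigma>
  proof -
    define H where "H t a = (if \<sigma>*\<bar>t\<bar> \<le> a then a * exp (- (a^2) / 2) else 0) *\<^sub>R g t" for t a :: real
    have H_meas[measurable]: "(\<lambda>(t,a). H t a) \<in> borel_measurable (lborel \<Otimes>\<^sub>M lborel)"
      unfolding H_def by measurable
    have st0: "0 \<le> \<sigma>*\<bar>t\<bar>" for t using \<sigma> by simp
    have inner_a: "(\<integral>a. H t a \<partial>lborel) = w \<sigma> t *\<^sub>R g t" for t
    proof -
      have "(\<integral>a. H t a \<partial>lborel) = (\<integral>a. (if \<sigma>*\<bar>t\<bar> \<le> a then a * exp (- (a^2) / 2) else 0) \<partial>lborel) *\<^sub>R g t"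
        unfolding H_def by (rule integral_scaleR_left) (use W(1)[OF st0[of t]] in simp)
      also have "\<dots> = w \<sigma> t *\<^sub>R g t"
        using W(2)[OF st0[of t]] by (simp add: w_def power_mult_distrib power2_abs)
      finally show ?thesis .
    qed
    have norm_inner: "(\<integral>a. norm (H t a) \<partial>lborel) = w \<sigma> t * norm (g t)" for t
    proof -
      have "(\<integral>a. norm (H t a) \<partial>lborel) = (\<integral>a. (if \<sigma>*\<bar>t\<bar> \<le> a then a * exp (- (a^2) / 2) else 0) * norm (g t) \<partial>lborel)"
      proof (rule Bochner_Integration.integral_cong[OF refl])
        fix a
        show "norm (H t a) = (if \<sigma>*\<bar>t\<bar> \<le> a then a * exp (- (a^2) / 2) else 0) * norm (g t)"
        proof (cases "\<sigma>*\<bar>t\<bar> \<le> a")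
          case True
          then have "0 \<le> a" using st0[of t] by linarith
          then show ?thesis using True unfolding H_def by (simp add: abs_mult)
        qed (simp add: H_def)
      qed
      also have "\<dots> = w \<sigma> t * norm (g t)"
        using W(2)[OF st0[of t]] by (simp add: w_def power_mult_distrib power2_abs)
      finally show ?thesis .
    qed
    have int_H: "integrable (lborel \<Otimes>\<^sub>M lborel) (\<lambda>(t,a). H t a)"
    proof (rule lborel_pair.Fubini_integrable[OF H_meas])
      have bd: "norm (w \<sigma> t * norm (g t)) \<le> norm (B * w \<sigma> t)" for t
        using w_pos[of \<sigma> t] g_bd[of t] B0 by (simp add: abs_mult mult.commute mult_left_mono)
      have "integrable lborel (\<lambda>t. w \<sigma> t * norm (g t))"
        by (rule Bochner_Integration.integrable_bound[where f="\<lambda>t. B * w \<sigma> t"])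
           (use w_int[of \<sigma>] \<sigma> bd in auto)
      then show "integrable lborel (\<lambda>x. \<integral>y. norm (case (x, y) of (t, a) \<Rightarrow> H t a) \<partial>lborel)"
        by (simp add: norm_inner)
      show "AE x in lborel. integrable lborel (\<lambda>y. case (x, y) of (t, a) \<Rightarrow> H t a)"
        using W(1)[OF st0] by (auto simp: H_def)
    qed
    have "J \<sigma> = (\<integral>t. \<integral>a. H t a \<partial>lborel \<partial>lborel)"
      unfolding J_def inner_a ..
    also have "\<dots> = (\<integral>a. \<integral>t. H t a \<partial>lborel \<partial>lborel)"
      using lborel_pair.Fubini_integral[of H, OF int_H] by simp
    also have "\<dots> = (\<integral>a. (a * exp (- (a^2) / 2)) *\<^sub>R S (a/\<sigma>) \<partial>lborel)"
    proof (rule Bochner_Integration.integral_cong[OF refl])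
      fix a
      have "(\<integral>t. H t a \<partial>lborel) = (\<integral>t. (a * exp (- (a^2) / 2)) *\<^sub>R (indicator {-(a/\<sigma>)..a/\<sigma>} t *\<^sub>R g t) \<partial>lborel)"
      proof (rule Bochner_Integration.integral_cong[OF refl])
        fix t
        have "\<sigma>*\<bar>t\<bar> \<le> a \<longleftrightarrow> \<bar>t\<bar> \<le> a/\<sigma>"
          using \<sigma> by (simp add: pos_le_divide_eq mult.commute)
        also have "\<dots> \<longleftrightarrow> t \<in> {-(a/\<sigma>)..a/\<sigma>}" by auto
        finally show "H t a = (a * exp (- (a^2) / 2)) *\<^sub>R (indicator {-(a/\<sigma>)..a/\<sigma>} t *\<^sub>R g t)"
          by (auto simp: H_def indicator_def)
      qed
      also have "\<dots> = (a * exp (- (a^2) / 2)) *\<^sub>R S (a/\<sigma>)"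
        unfolding S_def set_lebesgue_integral_def by (rule integral_scaleR_right)
      finally show "(\<integral>t. H t a \<partial>lborel) = (a * exp (- (a^2) / 2)) *\<^sub>R S (a/\<sigma>)" .
    qed
    finally show ?thesis .
  qed
  define \<sigma>n where "\<sigma>n n = inverse (real (Suc n))" for n
  have \<sigma>n_pos: "\<sigma>n n > 0" for n unfolding \<sigma>n_def by simp
  have \<sigma>n_lim: "\<sigma>n \<longlonglongrightarrow> 0" unfolding \<sigma>n_def by (rule LIMSEQ_inverse_real_of_nat)
  have J_lim: "(\<lambda>n. J (\<sigma>n n)) \<longlonglongrightarrow> I"
  proof -
    define K where "K a = (if 0 \<le> a then a * exp (- (a^2) / 2) else 0)" for a :: real
    have K_int: "integrable lborel K" using W(1)[of 0] unfolding K_def[abs_def] by simp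
    have K_1: "(\<integral>a. K a \<partial>lborel) = 1" using W(2)[of 0] unfolding K_def[abs_def] by simp
    have "(\<lambda>n. \<integral>a. (a * exp (- (a^2) / 2)) *\<^sub>R S (a / \<sigma>n n) \<partial>lborel) \<longlonglongrightarrow> (\<integral>a. K a *\<^sub>R I \<partial>lborel)"
    proof (rule integral_dominated_convergence[where w="\<lambda>a. K a * Sm"])
      show "(\<lambda>a. K a *\<^sub>R I) \<in> borel_measurable lborel" unfolding K_def by measurable
      show "(\<lambda>a. (a * exp (- (a^2) / 2)) *\<^sub>R S (a / \<sigma>n n)) \<in> borel_measurable lborel" for n by measurable
      show "integrable lborel (\<lambda>a. K a * Sm)" using K_int by simp
      show "AE a in lborel. (\<lambda>n. (a * exp (- (a^2) / 2)) *\<^sub>R S (a / \<sigma>n n)) \<longlonglongrightarrow> K a *\<^sub>R I"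
      proof (rule AE_I2)
        fix a :: real
        show "(\<lambda>n. (a * exp (- (a^2) / 2)) *\<^sub>R S (a / \<sigma>n n)) \<longlonglongrightarrow> K a *\<^sub>R I"
        proof (cases "a > 0")
          case True
          have "filterlim (\<lambda>n. a / \<sigma>n n) at_top sequentially"
            unfolding \<sigma>n_def using True by real_asymp
          then have Slim: "(\<lambda>n. S (a / \<sigma>n n)) \<longlonglongrightarrow> I" by (rule filterlim_compose[OF S_lim])
          show ?thesis using tendsto_scaleR[OF tendsto_const Slim, of "a * exp (- (a^2) / 2)"] True
            by (simp add: K_def)
        next
          case False
          have Z: "(a * exp (- (a^2) / 2)) *\<^sub>R S (a / \<sigma>n n) = 0" for n
          proof (cases "a = 0")
            case False
            with \<open>\<not> a > 0\<close> have "a / \<sigma>n n < 0" using \<sigma>n_pos[of n] by (simp add: divide_neg_pos)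
            then show ?thesis using S_neg by simp
          qed simp
          have K0: "K a *\<^sub>R I = 0" using False by (auto simp: K_def)
          show ?thesis by (simp only: Z K0) (rule tendsto_const)
        qed
      qed
      show "AE a in lborel. norm ((a * exp (- (a^2) / 2)) *\<^sub>R S (a / \<sigma>n n)) \<le> K a * Sm" for n
      proof (rule AE_I2)
        fix a :: real
        show "norm ((a * exp (- (a^2) / 2)) *\<^sub>R S (a / \<sigma>n n)) \<le> K a * Sm"
        proof (cases "0 \<le> a")
          case True
          then show ?thesis using Sm[of "a / \<sigma>n n"]
            by (simp add: K_def abs_mult mult_left_mono)
        next
          case False
          then have "a / \<sigma>n n < 0" using \<sigma>n_pos[of n] by (simp add: divide_neg_pos)
          then show ?thesis using S_neg False by (simp add: K_def)
        qed
      qed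
    qed
    also have "(\<integral>a. K a *\<^sub>R I \<partial>lborel) = I" using K_int K_1 by simp
    finally show ?thesis using step3[OF \<sigma>n_pos] by simp
  qed
  define h where "h \<sigma> x = (\<integral>z. exp (- (z^2) / 2) *\<^sub>R f (x + \<sigma>*z) \<partial>lborel)" for \<sigma> x :: real
  have gs: "(\<integral>t. w \<sigma> t *\<^sub>R cis (t*u) \<partial>lborel) = complex_of_real (sqrt (2*pi) / \<sigma> * exp (- ((u/\<sigma>)^2) / 2))"
    if \<sigma>: "\<sigma> > 0" for \<sigma> u
  proof -
    have "(\<integral>t. w \<sigma> t *\<^sub>R cis (t*u) \<partial>lborel) = abs (1/\<sigma>) *\<^sub>R (\<integral>q. w \<sigma> (0 + 1/\<sigma> * q) *\<^sub>R cis ((0 + 1/\<sigma>*q) *u) \<partial>lborel)"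
      using \<sigma> by (intro lborel_integral_real_affine) simp
    also have "(\<integral>q. w \<sigma> (0 + 1/\<sigma> * q) *\<^sub>R cis ((0 + 1/\<sigma>*q) *u) \<partial>lborel) = (\<integral>q. complex_of_real (exp (- (q^2) / 2)) * cis (q * (u/\<sigma>)) \<partial>lborel)"
    proof (rule Bochner_Integration.integral_cong[OF refl])
      fix q
      have 1: "(0 + 1/\<sigma>*q) *u = q * (u/\<sigma>)" by simp
      have 2: "w \<sigma> (0 + 1/\<sigma> * q) = exp (- (q^2) / 2)" using \<sigma> by (simp add: w_def)
      show "w \<sigma> (0 + 1/\<sigma> * q) *\<^sub>R cis ((0 + 1/\<sigma>*q) *u) = complex_of_real (exp (- (q^2) / 2)) * cis (q * (u/\<sigma>))"
        unfolding 1 2 by (simp add: scaleR_conv_of_real)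
    qed
    also have "\<dots> = complex_of_real (sqrt (2*pi) * exp (- ((u/\<sigma>)^2) / 2))" by (rule gauss_ft)
    finally show ?thesis using \<sigma> by (simp add: scaleR_conv_of_real)
  qed
  have fcis_int: "integrable lborel (\<lambda>y. f y * cis (t*y))" for t
    by (rule Bochner_Integration.integrable_bound[OF integrable_norm[OF f_int]]) (auto simp: norm_mult)
  interpret LM: pair_sigma_finite lborel M ..
  have step1: "J \<sigma> = sqrt (2*pi) *\<^sub>R (\<integral>x. h \<sigma> x \<partial>M)" if \<sigma>: "\<sigma> > 0" for \<sigma>
  proof -
    define \<Phi> where "\<Phi> t x y = w \<sigma> t *\<^sub>R (f y * cis (t*(y - x)))" for t x y :: real
    define \<Psi> where "\<Psi> t x = w \<sigma> t *\<^sub>R (fh t * cis (- t * x))" for t x :: real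
    have \<Psi>_eq: "(\<integral>y. \<Phi> t x y \<partial>lborel) = \<Psi> t x" for t x
    proof -
      have "\<Phi> t x y = w \<sigma> t *\<^sub>R ((f y * cis (t*y)) * cis (- t*x))" for y
      proof -
        have "cis (t*(y - x)) = cis (t*y) * cis (- t*x)" by (simp add: cis_mult algebra_simps)
        then show ?thesis unfolding \<Phi>_def by (simp add: mult.assoc)
      qed
      then have "(\<integral>y. \<Phi> t x y \<partial>lborel) = (\<integral>y. w \<sigma> t *\<^sub>R ((f y * cis (t*y)) * cis (- t*x)) \<partial>lborel)"
        by simp
      also have "\<dots> = \<Psi> t x" unfolding \<Psi>_def fh_def fourier_fun_def by simp
      finally show ?thesis .
    qed
    have g_eq: "w \<sigma> t *\<^sub>R g t = (\<integral>x. \<Psi> t x \<partial>M)" for t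
      unfolding g_def mh_def fourier_meas_def \<Psi>_def by simp
    have \<Psi>_meas[measurable]: "(\<lambda>(t,x). \<Psi> t x) \<in> borel_measurable (lborel \<Otimes>\<^sub>M M)"
      unfolding \<Psi>_def by measurable
    have norm_\<Psi>: "norm (\<Psi> t x) = w \<sigma> t * norm (fh t)" for t x
      unfolding \<Psi>_def using w_pos[of \<sigma> t] by (simp add: norm_mult)
    have int_\<Psi>: "integrable (lborel \<Otimes>\<^sub>M M) (\<lambda>(t,x). \<Psi> t x)"
    proof (rule LM.Fubini_integrable[OF \<Psi>_meas])
      have bd: "norm (Bm * (w \<sigma> t * norm (fh t))) \<le> norm (Bm * Bf * w \<sigma> t)" for t
        using w_pos[of \<sigma> t] fh_bd[of t] Bm0 Bf0
        by (simp add: abs_mult mult.assoc mult_left_mono mult.commute[of "w \<sigma> t"])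
      have "integrable lborel (\<lambda>t. Bm * (w \<sigma> t * norm (fh t)))"
        by (rule Bochner_Integration.integrable_bound[where f="\<lambda>t. Bm * Bf * w \<sigma> t"])
           (use w_int[of \<sigma>] \<sigma> bd in auto)
      then show "integrable lborel (\<lambda>t. \<integral>x. norm (case (t, x) of (t, x) \<Rightarrow> \<Psi> t x) \<partial>M)"
        by (simp add: norm_\<Psi> Bm_def mult.assoc)
      show "AE t in lborel. integrable M (\<lambda>x. case (t, x) of (t, x) \<Rightarrow> \<Psi> t x)"
      proof (rule AE_I2)
        fix t
        show "integrable M (\<lambda>x. case (t, x) of (t, x) \<Rightarrow> \<Psi> t x)"
          by (rule M.integrable_const_bound[where B="w \<sigma> t * norm (fh t)"]) (auto simp: norm_\<Psi>)
      qed
    qed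
    have \<Phi>_int: "integrable (lborel \<Otimes>\<^sub>M lborel) (\<lambda>(t,y). \<Phi> t x y)" for x
    proof (rule lborel_pair.Fubini_integrable)
      show "(\<lambda>(t,y). \<Phi> t x y) \<in> borel_measurable (lborel \<Otimes>\<^sub>M lborel)"
        unfolding \<Phi>_def by measurable
      have n: "norm (\<Phi> t x y) = w \<sigma> t * norm (f y)" for t y
        unfolding \<Phi>_def using w_pos[of \<sigma> t] by (simp add: norm_mult)
      have "integrable lborel (\<lambda>t. w \<sigma> t * Bf)" using w_int[of \<sigma>] \<sigma> by simp
      then show "integrable lborel (\<lambda>t. \<integral>y. norm (case (t, y) of (t, y) \<Rightarrow> \<Phi> t x y) \<partial>lborel)"
        by (simp add: n Bf_def)
      show "AE t in lborel. integrable lborel (\<lambda>y. case (t, y) of (t, y) \<Rightarrow> \<Phi> t x y)"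
      proof (rule AE_I2)
        fix t
        have "integrable lborel (\<lambda>y. f y * cis (t*(y - x)))"
          by (rule Bochner_Integration.integrable_bound[OF integrable_norm[OF f_int]]) (auto simp: norm_mult)
        then show "integrable lborel (\<lambda>y. case (t, y) of (t, y) \<Rightarrow> \<Phi> t x y)"
          unfolding \<Phi>_def by simp
      qed
    qed
    have inner_t: "(\<integral>t. \<Phi> t x y \<partial>lborel) = f y * complex_of_real (sqrt (2*pi) / \<sigma> * exp (- (((y-x)/\<sigma>)^2) / 2))" for x y
    proof -
      have "(\<integral>t. \<Phi> t x y \<partial>lborel) = (\<integral>t. f y * (w \<sigma> t *\<^sub>R cis (t*(y-x))) \<partial>lborel)"
        unfolding \<Phi>_def by (simp add: mult_scaleR_right)
      also have "\<dots> = f y * (\<integral>t. w \<sigma> t *\<^sub>R cis (t*(y-x)) \<partial>lborel)" by (rule integral_mult_right_zero)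
      also have "\<dots> = f y * complex_of_real (sqrt (2*pi) / \<sigma> * exp (- (((y-x)/\<sigma>)^2) / 2))"
        by (simp only: gs[OF \<sigma>])
      finally show ?thesis .
    qed
    have inner_y: "(\<integral>y. f y * complex_of_real (sqrt (2*pi) / \<sigma> * exp (- (((y-x)/\<sigma>)^2) / 2)) \<partial>lborel) = sqrt (2*pi) *\<^sub>R h \<sigma> x" for x
    proof -
      have "(\<integral>y. f y * complex_of_real (sqrt (2*pi) / \<sigma> * exp (- (((y-x)/\<sigma>)^2) / 2)) \<partial>lborel)
          = abs \<sigma> *\<^sub>R (\<integral>z. f (x + \<sigma>*z) * complex_of_real (sqrt (2*pi) / \<sigma> * exp (- (((x + \<sigma>*z - x)/\<sigma>)^2) / 2)) \<partial>lborel)"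
        using \<sigma> by (intro lborel_integral_real_affine) simp
      also have "(\<integral>z. f (x + \<sigma>*z) * complex_of_real (sqrt (2*pi) / \<sigma> * exp (- (((x + \<sigma>*z - x)/\<sigma>)^2) / 2)) \<partial>lborel)
          = (\<integral>z. (sqrt (2*pi) / \<sigma>) *\<^sub>R (exp (- (z^2) / 2) *\<^sub>R f (x + \<sigma>*z)) \<partial>lborel)"
      proof (rule Bochner_Integration.integral_cong[OF refl])
        fix z
        have "(x + \<sigma>*z - x)/\<sigma> = z" using \<sigma> by simp
        then show "f (x + \<sigma>*z) * complex_of_real (sqrt (2*pi) / \<sigma> * exp (- (((x + \<sigma>*z - x)/\<sigma>)^2) / 2))
            = (sqrt (2*pi) / \<sigma>) *\<^sub>R (exp (- (z^2) / 2) *\<^sub>R f (x + \<sigma>*z))"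
          by (simp add: scaleR_conv_of_real mult.commute mult.left_commute)
      qed
      also have "\<dots> = (sqrt (2*pi) / \<sigma>) *\<^sub>R h \<sigma> x"
        unfolding h_def by (rule integral_scaleR_right)
      finally show ?thesis using \<sigma> by simp
    qed
    have "J \<sigma> = (\<integral>t. \<integral>x. \<Psi> t x \<partial>M \<partial>lborel)" unfolding J_def g_eq ..
    also have "\<dots> = (\<integral>x. \<integral>t. \<Psi> t x \<partial>lborel \<partial>M)"
      using LM.Fubini_integral[of \<Psi>, OF int_\<Psi>] by simp
    also have "\<dots> = (\<integral>x. \<integral>t. \<integral>y. \<Phi> t x y \<partial>lborel \<partial>lborel \<partial>M)" unfolding \<Psi>_eq ..
    also have "\<dots> = (\<integral>x. \<integral>y. \<integral>t. \<Phi> t x y \<partial>lborel \<partial>lborel \<partial>M)"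
    proof (rule Bochner_Integration.integral_cong[OF refl])
      fix x
      show "(\<integral>t. \<integral>y. \<Phi> t x y \<partial>lborel \<partial>lborel) = (\<integral>y. \<integral>t. \<Phi> t x y \<partial>lborel \<partial>lborel)"
        using lborel_pair.Fubini_integral[of "\<lambda>t y. \<Phi> t x y", OF \<Phi>_int[of x]] by simp
    qed
    also have "\<dots> = (\<integral>x. sqrt (2*pi) *\<^sub>R h \<sigma> x \<partial>M)" unfolding inner_t inner_y ..
    also have "\<dots> = sqrt (2*pi) *\<^sub>R (\<integral>x. h \<sigma> x \<partial>M)" by (rule integral_scaleR_right)
    finally show ?thesis .
  qed
  have Cf0: "0 \<le> Cf" using Cf[of 0] norm_ge_zero order_trans by blast
  have h_bd: "norm (h \<sigma> x) \<le> Cf * sqrt (2*pi)" for \<sigma> x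
  proof -
    have pb: "norm (exp (- (z^2) / 2) *\<^sub>R f (x + \<sigma>*z)) \<le> Cf * exp (- (z^2) / 2)" for z
      using Cf[of "x + \<sigma>*z"] by (simp add: mult.commute mult_left_mono)
    have i2: "integrable lborel (\<lambda>z. Cf * exp (- (z^2) / 2))" using gauss_int by simp
    have i1: "integrable lborel (\<lambda>z. exp (- (z^2) / 2) *\<^sub>R f (x + \<sigma>*z))"
      by (rule Bochner_Integration.integrable_bound[OF i2]) (use pb Cf0 in \<open>auto intro: order_trans\<close>)
    have "norm (h \<sigma> x) \<le> (\<integral>z. Cf * exp (- (z^2) / 2) \<partial>lborel)"
      unfolding h_def by (rule Bochner_Integration.integral_norm_bound_integral[OF i1 i2 pb])
    also have "\<dots> = Cf * sqrt (2*pi)" using gauss_integral by simp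
    finally show ?thesis .
  qed
  have h_meas[measurable]: "h \<sigma> \<in> borel_measurable M" for \<sigma>
    unfolding h_def[abs_def] by (rule lborel.borel_measurable_lebesgue_integral) measurable
  have h_lim: "AE x in M. (\<lambda>n. h (\<sigma>n n) x) \<longlonglongrightarrow> sqrt (2*pi) *\<^sub>R f x"
    using f_cont
  proof eventually_elim
    case (elim x)
    have "(\<lambda>n. h (\<sigma>n n) x) \<longlonglongrightarrow> (\<integral>z. exp (- (z^2) / 2) *\<^sub>R f x \<partial>lborel)"
      unfolding h_def
    proof (rule integral_dominated_convergence[where w="\<lambda>z. Cf * exp (- (z^2) / 2)"])
      show "(\<lambda>z. exp (- (z^2) / 2) *\<^sub>R f x) \<in> borel_measurable lborel" by measurable
      show "(\<lambda>z. exp (- (z^2) / 2) *\<^sub>R f (x + \<sigma>n n * z)) \<in> borel_measurable lborel" for n by measurable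
      show "integrable lborel (\<lambda>z. Cf * exp (- (z^2) / 2))" using gauss_int by simp
      show "AE z in lborel. (\<lambda>n. exp (- (z^2) / 2) *\<^sub>R f (x + \<sigma>n n * z)) \<longlonglongrightarrow> exp (- (z^2) / 2) *\<^sub>R f x"
      proof (rule AE_I2)
        fix z
        have "(\<lambda>n. x + \<sigma>n n * z) \<longlonglongrightarrow> x + 0 * z"
          by (intro tendsto_add tendsto_mult tendsto_const \<sigma>n_lim)
        then have "(\<lambda>n. f (x + \<sigma>n n * z)) \<longlonglongrightarrow> f x"
          using isCont_tendsto_compose[OF elim] by simp
        then show "(\<lambda>n. exp (- (z^2) / 2) *\<^sub>R f (x + \<sigma>n n * z)) \<longlonglongrightarrow> exp (- (z^2) / 2) *\<^sub>R f x"
          by (intro tendsto_scaleR tendsto_const)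
      qed
      show "AE z in lborel. norm (exp (- (z^2) / 2) *\<^sub>R f (x + \<sigma>n n * z)) \<le> Cf * exp (- (z^2) / 2)" for n
        using Cf[of "x + \<sigma>n n * z" for z] by (auto simp: mult.commute mult_left_mono)
    qed
    also have "(\<integral>z. exp (- (z^2) / 2) *\<^sub>R f x \<partial>lborel) = sqrt (2*pi) *\<^sub>R f x"
      using gauss_int gauss_integral by simp
    finally show ?case .
  qed
  have f_measM[measurable]: "f \<in> borel_measurable M" by measurable
  have M_lim: "(\<lambda>n. \<integral>x. h (\<sigma>n n) x \<partial>M) \<longlonglongrightarrow> (\<integral>x. sqrt (2*pi) *\<^sub>R f x \<partial>M)"
    by (rule integral_dominated_convergence[where w="\<lambda>x. Cf * sqrt (2*pi)"]) (use h_lim h_bd in auto)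
  have "(\<lambda>n. J (\<sigma>n n)) \<longlonglongrightarrow> sqrt (2*pi) *\<^sub>R (\<integral>x. sqrt (2*pi) *\<^sub>R f x \<partial>M)"
    using tendsto_scaleR[OF tendsto_const M_lim, of "sqrt (2*pi)"] step1[OF \<sigma>n_pos] by simp
  then have "I = sqrt (2*pi) *\<^sub>R (\<integral>x. sqrt (2*pi) *\<^sub>R f x \<partial>M)"
    using J_lim LIMSEQ_unique by blast
  also have "\<dots> = (2*pi) *\<^sub>R (\<integral>x. f x \<partial>M)" by simp
  finally show ?thesis by (simp add: scaleR_conv_of_real field_simps)
qed
end
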